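(* Let $X$ be a finite alphabet, $\#$ a symbol not in $X$, $X^\# = X \cup \{\#\}$, and let $w \in \overline{X}^*$. Then the following are equivalent: (i) $w$ represents $1$ in the polycyclic monoid $P(X)$; (ii) $w$ admits a permissible padding which represents $1$ in the polycyclic monoid $P(X^\#)$; (iii) $w$ admits a permissible padding which represents $1$ in the free group $F(X^\#)$.
   Context: For an alphabet $Y$, $\overline{Y} = \{y, y^{-1} : y \in Y\}$; letters of $Y$ are positive generators and letters $y^{-1}$ negative generators. The polycyclic monoid $P(Y)$ is the monoid of partial functions on $Y^*$ (composed left to right: $fg$ means apply $f$ then $g$) generated by $y: z \mapsto zy$ (defined everywhere) and $y^{-1}: zy \mapsto z$ (defined on $Y^*y$), $y \in Y$. $F(Y)$ is the free group with presentation $\langle \overline{Y} \mid yy^{-1} = y^{-1}y = 1 \ (y \in Y)\rangle$. Permissible padding: for $w = w_1 \cdots w_n$ with $w_i \in \overline{X}$, a permissible padding of $w$ is a word $x_1 x_2 \cdots x_n (\#^{-1})^k$ over $\overline{X^\#}$ with $k \geq 0$, where $x_i = (\#^{-1})^{m_i} w_i \#$ for some $m_i \geq 0$ if $w_i$ is a negative generator, and $x_i = w_i \#$ if $w_i$ is a positive generator. *)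

theory Defs
  imports Main
begin

text \<open>A letter of overline(Y) is a pair (y, b): b = True means the positive generator y,
  b = False means the negative generator y^-1.\<close>
type_synonym 'a gen = "'a \<times> bool"

definition ginv :: "'a gen \<Rightarrow> 'a gen" where
  "ginv g = (fst g, \<not> snd g)"

fun gen_act :: "'a gen \<Rightarrow> 'a list \<Rightarrow> 'a list option" where
  "gen_act (y, True) z = Some (z @ [y])"
| "gen_act (y, False) z =
     (if z \<noteq> [] \<and> last z = y then Some (butlast z) else None)"

fun word_act :: "'a gen list \<Rightarrow> 'a list \<Rightarrow> 'a list option" where
  "word_act [] z = Some z"
| "word_act (g # w) z = Option.bind (gen_act g z) (word_act w)"

definition rep_one_poly :: "'a set \<Rightarrow> 'a gen list \<Rightarrow> bool" where
  "rep_one_poly Y w \<longleftrightarrow> (\<forall>z \<in> lists Y. word_act w z = Some z)"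

inductive free_step :: "'a gen list \<Rightarrow> 'a gen list \<Rightarrow> bool" where
  "free_step (u @ [g, ginv g] @ v) (u @ v)"

definition free_eq :: "'a gen list \<Rightarrow> 'a gen list \<Rightarrow> bool" where
  "free_eq u v \<longleftrightarrow> (u, v) \<in> (({(x, y). free_step x y} \<union> {(x, y). free_step y x})\<^sup>*)"

definition rep_one_free :: "'a gen list \<Rightarrow> bool" where
  "rep_one_free w \<longleftrightarrow> free_eq w []"

definition pad_letter :: "'a \<Rightarrow> 'a gen \<Rightarrow> nat \<Rightarrow> 'a gen list" where
  "pad_letter h g m =
     (if snd g then [g, (h, True)] else replicate m (h, False) @ [g, (h, True)])"

definition permissible_padding :: "'a \<Rightarrow> 'a gen list \<Rightarrow> 'a gen list \<Rightarrow> bool" where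
  "permissible_padding h w p \<longleftrightarrow>
     (\<exists>ms k. length ms = length w \<and>
        p = concat (map (\<lambda>(g, m). pad_letter h g m) (zip w ms)) @ replicate k (h, False))"

end

theory Submission
  imports Defs
begin

lemma word_act_append:
  "word_act (u @ v) z = Option.bind (word_act u z) (word_act v)"
  by (induction u arbitrary: z) (auto split: Option.bind_split)

lemma word_act_prefix:
  "word_act w z = Some z' \<Longrightarrow> word_act w (a @ z) = Some (a @ z')"
proof (induction w arbitrary: z)
  case Nil then show ?case by simp
next
  case (Cons g w)
  obtain y b where g: "g = (y, b)" by (cases g)
  show ?case
  proof (cases b)
    case True
    then show ?thesis using Cons g by simp
  next
    case False
    with Cons g have z: "z \<noteq> [] \<and> last z = y" and r: "word_act w (butlast z) = Some z'"
      by (auto split: if_splits)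
    have "butlast (a @ z) = a @ butlast z" using z by (simp add: butlast_append)
    then show ?thesis using Cons.IH[OF r] z g False by simp
  qed
qed

lemma rep_one_poly_iff: "rep_one_poly Y w \<longleftrightarrow> word_act w [] = Some []"
  unfolding rep_one_poly_def
  using word_act_prefix[of w "[]" "[]"] by force

section \<open>(i) implies (ii)\<close>

lemma trail_decomp: "\<exists>Q m. P = Q @ replicate m h \<and> (Q = [] \<or> last Q \<noteq> h)"
proof (induction P rule: rev_induct)
  case Nil then show ?case by simp
next
  case (snoc x P)
  show ?case
  proof (cases "x = h")
    case True
    from snoc obtain Q m where "P = Q @ replicate m h" "Q = [] \<or> last Q \<noteq> h" by blast
    then show ?thesis using True
      by (intro exI[of _ Q] exI[of _ "Suc m"]) (simp add: replicate_append_same)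
  next
    case False
    then show ?thesis by (intro exI[of _ "P @ [x]"] exI[of _ 0]) simp
  qed
qed

lemma act_pops: "word_act (replicate m (h, False)) (Q @ replicate m h) = Some Q"
proof (induction m)
  case 0 then show ?case by simp
next
  case (Suc m)
  have "Q @ replicate (Suc m) h = (Q @ replicate m h) @ [h]"
    by (simp add: replicate_append_same)
  then show ?case using Suc by (simp add: butlast_append)
qed

lemma pad_exists:
  assumes "\<forall>g\<in>set w. fst g \<noteq> h" "filter (\<lambda>c. c \<noteq> h) P = s" "word_act w s = Some t"
  shows "\<exists>ms P'. length ms = length w \<and>
     word_act (concat (map (\<lambda>(g, m). pad_letter h g m) (zip w ms))) P = Some P' \<and>
     filter (\<lambda>c. c \<noteq> h) P' = t"
  using assms
proof (induction w arbitrary: P s)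
  case Nil then show ?case by simp
next
  case (Cons g w)
  obtain y b where g: "g = (y, b)" by (cases g)
  have yh: "y \<noteq> h" using Cons.prems g by simp
  show ?case
  proof (cases b)
    case True
    have pa: "word_act (pad_letter h g 0) P = Some (P @ [y, h])"
      using g True by (simp add: pad_letter_def)
    have r: "word_act w (s @ [y]) = Some t" using Cons.prems g True by simp
    have f: "filter (\<lambda>c. c \<noteq> h) (P @ [y, h]) = s @ [y]" using Cons.prems yh by simp
    obtain ms P' where "length ms = length w"
      "word_act (concat (map (\<lambda>(g, m). pad_letter h g m) (zip w ms))) (P @ [y, h]) = Some P'"
      "filter (\<lambda>c. c \<noteq> h) P' = t"
      using Cons.IH[OF _ f r] Cons.prems by auto
    then show ?thesis using pa
      by (intro exI[of _ "0 # ms"] exI[of _ P']) (simp add: word_act_append)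
  next
    case False
    have s: "s \<noteq> [] \<and> last s = y" and r: "word_act w (butlast s) = Some t"
      using Cons.prems(3) g False by (auto split: if_splits)
    from trail_decomp[of P h] obtain Q m where P: "P = Q @ replicate m h" and Q: "Q = [] \<or> last Q \<noteq> h"
      by blast
    have fQ: "filter (\<lambda>c. c \<noteq> h) Q = s" using Cons.prems P by simp
    then have Qne: "Q \<noteq> []" using s by auto
    then have Qd: "Q = butlast Q @ [last Q]" by simp
    have lq: "last Q \<noteq> h" using Q Qne by simp
    have "filter (\<lambda>c. c \<noteq> h) (butlast Q @ [last Q]) = filter (\<lambda>c. c \<noteq> h) (butlast Q) @ [last Q]"
      using lq by simp
    then have "filter (\<lambda>c. c \<noteq> h) Q = filter (\<lambda>c. c \<noteq> h) (butlast Q) @ [last Q]"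
      using Qd by metis
    then have lQ: "last Q = y" and fb: "filter (\<lambda>c. c \<noteq> h) (butlast Q @ [h]) = butlast s"
      using fQ s by auto
    have pa: "word_act (pad_letter h g m) P = Some (butlast Q @ [h])"
      using g False P Qne lQ
      by (simp add: pad_letter_def word_act_append act_pops)
    obtain ms P' where "length ms = length w"
      "word_act (concat (map (\<lambda>(g, m). pad_letter h g m) (zip w ms))) (butlast Q @ [h]) = Some P'"
      "filter (\<lambda>c. c \<noteq> h) P' = t"
      using Cons.IH[OF _ fb r] Cons.prems by auto
    then show ?thesis using pa
      by (intro exI[of _ "m # ms"] exI[of _ P']) (simp add: word_act_append)
  qed
qed

lemma i_to_ii:
  assumes "\<forall>g\<in>set w. fst g \<noteq> h" "word_act w [] = Some []"
  shows "\<exists>p. permissible_padding h w p \<and> word_act p [] = Some []"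
proof -
  obtain ms P' where ms: "length ms = length w"
    and a: "word_act (concat (map (\<lambda>(g, m). pad_letter h g m) (zip w ms))) [] = Some P'"
    and f: "filter (\<lambda>c. c \<noteq> h) P' = []"
    using pad_exists[OF assms(1) filter.simps(1) assms(2)] by blast
  have "P' = replicate (length P') h"
    using f by (simp add: filter_empty_conv replicate_length_same)
  then have "word_act (replicate (length P') (h, False)) P' = Some []"
    using act_pops[of "length P'" h "[]"] by simp
  then show ?thesis using ms a unfolding permissible_padding_def
    by (intro exI[of _ "concat (map (\<lambda>(g, m). pad_letter h g m) (zip w ms)) @ replicate (length P') (h, False)"])
       (auto simp: word_act_append)
qed

section \<open>(ii) implies (iii)\<close>

lemma free_eq_refl: "free_eq u u" unfolding free_eq_def by simp

lemma free_eq_trans: "free_eq u v \<Longrightarrow> free_eq v x \<Longrightarrow> free_eq u x"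
  unfolding free_eq_def by (rule rtrancl_trans)

lemma free_eq_step: "free_step u v \<Longrightarrow> free_eq u v"
  unfolding free_eq_def by auto

lemma poly_free:
  "word_act p s = Some t \<Longrightarrow> free_eq (map (\<lambda>y. (y, True)) s @ p) (map (\<lambda>y. (y, True)) t)"
proof (induction p arbitrary: s)
  case Nil then show ?case by (simp add: free_eq_refl)
next
  case (Cons g p)
  obtain y b where g: "g = (y, b)" by (cases g)
  show ?case
  proof (cases b)
    case True
    then show ?thesis using Cons.IH[of "s @ [y]"] Cons.prems g by simp
  next
    case False
    have s: "s \<noteq> [] \<and> last s = y" and r: "word_act p (butlast s) = Some t"
      using Cons.prems g False by (auto split: if_splits)
    have sd: "s = butlast s @ [y]" using s append_butlast_last_id by metis
    have "map (\<lambda>y. (y, True)) s @ g # p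
        = map (\<lambda>y. (y, True)) (butlast s) @ [(y, True), ginv (y, True)] @ p"
      using g False by (subst sd) (simp add: ginv_def)
    moreover have "free_step (map (\<lambda>y. (y, True)) (butlast s) @ [(y, True), ginv (y, True)] @ p)
        (map (\<lambda>y. (y, True)) (butlast s) @ p)"
      by (rule free_step.intros)
    ultimately show ?thesis using free_eq_trans[OF free_eq_step Cons.IH[OF r]] by simp
  qed
qed

lemma ii_to_iii: "word_act p [] = Some [] \<Longrightarrow> rep_one_free p"
  unfolding rep_one_free_def using poly_free[of p "[]" "[]"] by simp

section \<open>(iii) implies (i)\<close>

fun fstep :: "'a gen list \<Rightarrow> 'a gen \<Rightarrow> 'a gen list" where
  "fstep [] g = [g]"
| "fstep (c # S) g = (if c = ginv g then S else g # c # S)"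

fun fred_ok :: "'a gen list \<Rightarrow> bool" where
  "fred_ok (a # b # S) = (b \<noteq> ginv a \<and> fred_ok (b # S))"
| "fred_ok _ = True"

lemma ginv_ginv[simp]: "ginv (ginv g) = g" by (simp add: ginv_def)

lemma ginv_eq_iff: "ginv a = b \<longleftrightarrow> a = ginv b" by (auto simp: ginv_def)

lemma fred_ok_step: "fred_ok S \<Longrightarrow> fred_ok (fstep S g)"
  by (cases S rule: fred_ok.cases) (auto simp: ginv_eq_iff)

lemma fred_ok_foldl: "fred_ok S \<Longrightarrow> fred_ok (foldl fstep S w)"
  by (induction w arbitrary: S) (auto simp: fred_ok_step)

lemma fstep_cancel: "fred_ok S \<Longrightarrow> fstep (fstep S g) (ginv g) = S"
proof (cases S)
  case Nil then show ?thesis by simp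
next
  case (Cons c S')
  assume ok: "fred_ok S"
  show ?thesis
  proof (cases "c = ginv g")
    case True
    then show ?thesis using Cons ok by (cases S') (auto simp: ginv_eq_iff)
  next
    case False
    then show ?thesis using Cons by simp
  qed
qed

definition fred :: "'a gen list \<Rightarrow> 'a gen list" where
  "fred w = foldl fstep [] w"

lemma fred_step: "free_step u v \<Longrightarrow> fred u = fred v"
proof (induction rule: free_step.induct)
  case (1 u g v)
  have "fred_ok (foldl fstep [] u)" by (rule fred_ok_foldl) simp
  then show ?case unfolding fred_def by (simp add: fstep_cancel)
qed

lemma free_eq_fred: "free_eq u v \<Longrightarrow> fred u = fred v"
  unfolding free_eq_def
proof (induction rule: rtrancl_induct)
  case base then show ?case by simp
next
  case (step y z)
  then show ?case using fred_step by auto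
qed

fun nf :: "'a \<Rightarrow> 'a gen list \<Rightarrow> bool" where
  "nf h (a # b # S) = (\<not> (snd a \<and> fst a \<noteq> h \<and> b = (h, False)) \<and> nf h (b # S))"
| "nf h _ = True"

definition bnd :: "'a \<Rightarrow> 'a gen list \<Rightarrow> bool" where
  "bnd h S \<longleftrightarrow> S = [] \<or> hd S = (h, True)"

definition bad :: "'a \<Rightarrow> 'a gen list \<Rightarrow> bool" where
  "bad h S \<longleftrightarrow> (\<exists>g\<in>set (filter (\<lambda>g. fst g \<noteq> h) S). \<not> snd g)"

lemma nf_tl: "nf h (c # S) \<Longrightarrow> nf h S"
  by (cases S) auto

lemma filter_hstep: "fst g = h \<Longrightarrow> filter (\<lambda>g. fst g \<noteq> h) (fstep S g) = filter (\<lambda>g. fst g \<noteq> h) S"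
  by (cases S) (auto simp: ginv_def)

lemma filter_hsteps: "\<forall>g\<in>set u. fst g = h \<Longrightarrow>
   filter (\<lambda>g. fst g \<noteq> h) (foldl fstep S u) = filter (\<lambda>g. fst g \<noteq> h) S"
  by (induction u arbitrary: S) (auto simp: filter_hstep)

lemma nf_negh: "nf h S \<Longrightarrow> nf h (fstep S (h, False))"
  by (cases S) (auto simp: ginv_def nf_tl)

lemma nf_neghs: "nf h S \<Longrightarrow> nf h (foldl fstep S (replicate m (h, False)))"
  by (induction m arbitrary: S) (auto simp: nf_negh)

lemma block:
  assumes "bnd h S" "nf h S" "fst g \<noteq> h" "S' = foldl fstep S (pad_letter h g m)"
  shows "bnd h S' \<and> nf h S' \<and> (\<not> bad h S' \<longrightarrow> \<not> bad h S \<and>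
     (\<forall>s. map (\<lambda>y. (y, True)) s = rev (filter (\<lambda>g. fst g \<noteq> h) S) \<longrightarrow>
        (\<exists>s'. gen_act g s = Some s' \<and> map (\<lambda>y. (y, True)) s' = rev (filter (\<lambda>g. fst g \<noteq> h) S'))))"
proof -
  obtain y b where g: "g = (y, b)" by (cases g)
  have yh: "y \<noteq> h" using assms g by simp
  show ?thesis
  proof (cases b)
    case True
    have "fstep S g = g # S"
      using assms(1) g True yh by (cases S) (auto simp: bnd_def ginv_def)
    then have S': "S' = (h, True) # g # S"
      using assms(4) g True yh by (simp add: pad_letter_def ginv_def)
    have "nf h S'" using S' assms(1,2) g True by (cases S) (auto simp: bnd_def)
    moreover have "bnd h S'" using S' by (simp add: bnd_def)
    moreover have "bad h S' = bad h S" using S' g True yh by (simp add: bad_def)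
    moreover have "filter (\<lambda>g. fst g \<noteq> h) S' = g # filter (\<lambda>g. fst g \<noteq> h) S"
      using S' g yh by simp
    ultimately show ?thesis using g True
      by (auto intro!: exI[of _ "_ @ [y]"])
  next
    case False
    define S1 where "S1 = foldl fstep S (replicate m (h, False))"
    have nf1: "nf h S1" unfolding S1_def using assms(2) by (rule nf_neghs)
    have f1: "filter (\<lambda>g. fst g \<noteq> h) S1 = filter (\<lambda>g. fst g \<noteq> h) S"
      unfolding S1_def by (rule filter_hsteps) simp
    have S'': "S' = fstep (fstep S1 g) (h, True)"
      using assms(4) g False by (simp add: pad_letter_def S1_def)
    show ?thesis
    proof (cases "S1 \<noteq> [] \<and> hd S1 = (y, True)")
      case True
      then have "S1 = (y, True) # tl S1" by (cases S1) auto
      then obtain S2 where S1: "S1 = (y, True) # S2" by blast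
      have nf2: "nf h S2" using nf_tl[of h "(y, True)" S2] nf1 S1 by simp
      have h2: "S2 = [] \<or> hd S2 \<noteq> (h, False)" using nf1 S1 yh by (cases S2) auto
      have S': "S' = (h, True) # S2"
        using S'' S1 g False h2 by (cases S2) (auto simp: ginv_def)
      have "nf h S'" using S' nf2 by (cases S2) auto
      moreover have "bnd h S'" using S' by (simp add: bnd_def)
      moreover have fS: "filter (\<lambda>g. fst g \<noteq> h) S = (y, True) # filter (\<lambda>g. fst g \<noteq> h) S'"
        using f1 S1 S' yh by simp
      moreover have "bad h S' = bad h S" using fS by (simp add: bad_def)
      moreover have "\<forall>s. map (\<lambda>y. (y, True)) s = rev (filter (\<lambda>g. fst g \<noteq> h) S) \<longrightarrow>
        (\<exists>s'. gen_act g s = Some s' \<and> map (\<lambda>y. (y, True)) s' = rev (filter (\<lambda>g. fst g \<noteq> h) S'))"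
      proof (intro allI impI)
        fix s :: "'a list"
        assume "map (\<lambda>y. (y, True)) s = rev (filter (\<lambda>g. fst g \<noteq> h) S)"
        then have ms: "map (\<lambda>y. (y, True)) s = rev (filter (\<lambda>g. fst g \<noteq> h) S') @ [(y, True)]"
          using fS by simp
        then have sne: "s \<noteq> []" by auto
        then have sd: "s = butlast s @ [last s]" by simp
        have "map (\<lambda>y. (y, True)) (butlast s) @ [(last s, True)] =
              rev (filter (\<lambda>g. fst g \<noteq> h) S') @ [(y, True)]"
          using ms by (subst (asm) sd) simp
        then have "last s = y" "map (\<lambda>y. (y, True)) (butlast s) = rev (filter (\<lambda>g. fst g \<noteq> h) S')"
          by auto
        then show "\<exists>s'. gen_act g s = Some s' \<and> map (\<lambda>y. (y, True)) s' = rev (filter (\<lambda>g. fst g \<noteq> h) S')"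
          using sne g False by simp
      qed
      ultimately show ?thesis by blast
    next
      case notc: False
      have "fstep S1 g = g # S1"
        using notc g False by (cases S1) (auto simp: ginv_def)
      then have S': "S' = (h, True) # g # S1" using S'' g False yh by (simp add: ginv_def)
      have "nf h S'" using S' nf1 g False by (cases S1) auto
      moreover have "bnd h S'" using S' by (simp add: bnd_def)
      moreover have "bad h S'" using S' g False yh by (simp add: bad_def)
      ultimately show ?thesis by blast
    qed
  qed
qed

lemma blocks:
  assumes "length ms = length w" "\<forall>g\<in>set w. fst g \<noteq> h" "bnd h S" "nf h S"
    "F = foldl fstep S (concat (map (\<lambda>(g, m). pad_letter h g m) (zip w ms)))"
    "\<not> bad h F"
  shows "\<not> bad h S \<and> (\<forall>s. map (\<lambda>y. (y, True)) s = rev (filter (\<lambda>g. fst g \<noteq> h) S) \<longrightarrow>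
     (\<exists>t. word_act w s = Some t \<and> map (\<lambda>y. (y, True)) t = rev (filter (\<lambda>g. fst g \<noteq> h) F)))"
  using assms
proof (induction w arbitrary: ms S)
  case Nil then show ?case by simp
next
  case (Cons g w)
  then obtain m ms' where ms: "ms = m # ms'" and l: "length ms' = length w" by (cases ms) auto
  define S' where "S' = foldl fstep S (pad_letter h g m)"
  have B: "bnd h S' \<and> nf h S' \<and> (\<not> bad h S' \<longrightarrow> \<not> bad h S \<and>
     (\<forall>s. map (\<lambda>y. (y, True)) s = rev (filter (\<lambda>g. fst g \<noteq> h) S) \<longrightarrow>
        (\<exists>s'. gen_act g s = Some s' \<and> map (\<lambda>y. (y, True)) s' = rev (filter (\<lambda>g. fst g \<noteq> h) S'))))"
    using block[OF Cons.prems(3,4) _ S'_def] Cons.prems(2) by simp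
  have F: "F = foldl fstep S' (concat (map (\<lambda>(g, m). pad_letter h g m) (zip w ms')))"
    using Cons.prems(5) ms by (simp add: S'_def)
  have IH: "\<not> bad h S' \<and> (\<forall>s. map (\<lambda>y. (y, True)) s = rev (filter (\<lambda>g. fst g \<noteq> h) S') \<longrightarrow>
     (\<exists>t. word_act w s = Some t \<and> map (\<lambda>y. (y, True)) t = rev (filter (\<lambda>g. fst g \<noteq> h) F)))"
    using Cons.IH[OF l _ _ _ F Cons.prems(6)] Cons.prems(2) B by simp
  show ?case
  proof (intro conjI allI impI)
    show "\<not> bad h S" using B IH by blast
  next
    fix s :: "'a list"
    assume "map (\<lambda>y. (y, True)) s = rev (filter (\<lambda>g. fst g \<noteq> h) S)"
    then obtain s' where "gen_act g s = Some s'" "map (\<lambda>y. (y, True)) s' = rev (filter (\<lambda>g. fst g \<noteq> h) S')"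
      using B IH by blast
    then show "\<exists>t. word_act (g # w) s = Some t \<and> map (\<lambda>y. (y, True)) t = rev (filter (\<lambda>g. fst g \<noteq> h) F)"
      using IH by simp
  qed
qed

lemma iii_to_i:
  assumes "\<forall>g\<in>set w. fst g \<noteq> h" "permissible_padding h w p" "rep_one_free p"
  shows "word_act w [] = Some []"
proof -
  obtain ms k where ms: "length ms = length w"
    and p: "p = concat (map (\<lambda>(g, m). pad_letter h g m) (zip w ms)) @ replicate k (h, False)"
    using assms(2) unfolding permissible_padding_def by blast
  have "fred p = fred []" using assms(3) free_eq_fred unfolding rep_one_free_def by blast
  then have e: "foldl fstep [] p = []" by (simp add: fred_def)
  define F where "F = foldl fstep [] (concat (map (\<lambda>(g, m). pad_letter h g m) (zip w ms)))"
  have "foldl fstep F (replicate k (h, False)) = []" using e p by (simp add: F_def)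
  then have fF: "filter (\<lambda>g. fst g \<noteq> h) F = []"
    using filter_hsteps[of "replicate k (h, False)" h F] by simp
  then have "\<not> bad h F" by (simp add: bad_def)
  then obtain t where "word_act w [] = Some t" "map (\<lambda>y. (y, True)) t = []"
    using blocks[OF ms assms(1) _ _ F_def] fF by (auto simp: bnd_def)
  then show ?thesis by simp
qed

theorem proposition4p10:
  fixes X :: "'a set" and h :: 'a and w :: "'a gen list"
  assumes "finite X" and "h \<notin> X" and "\<forall>g \<in> set w. fst g \<in> X"
  shows "(rep_one_poly X w \<longleftrightarrow>
            (\<exists>p. permissible_padding h w p \<and> rep_one_poly (insert h X) p))
       \<and> (rep_one_poly X w \<longleftrightarrow>
            (\<exists>p. permissible_padding h w p \<and> rep_one_free p))"
proof -
  have wh: "\<forall>g\<in>set w. fst g \<noteq> h" using assms(2,3) by auto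
  show ?thesis
    unfolding rep_one_poly_iff
    using i_to_ii[OF wh] ii_to_iii iii_to_i[OF wh] by blast
qed

end
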